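(* Let $a,b,c\geq 1$ be integers, put $v=a+b+c+1$ and $L=\{1^a,2^b,4^c\}$, and suppose $4\leq\lfloor v/2\rfloor$. Then there exists a Hamiltonian path $H$ of $K_v$ with $\ell(H)=L$ if and only if for every divisor $d$ of $v$, the number of elements of $L$ (with multiplicity) that are multiples of $d$ does not exceed $v-d$.
   Context: $K_v$ is the complete graph on $\{0,1,\dots,v-1\}$. The length of an edge $[x,y]$ is $\ell(x,y)=\min(|x-y|,\,v-|x-y|)$, and for a subgraph $\Gamma$, $\ell(\Gamma)$ is the multiset of lengths of its edges. $\{1^a,2^b,4^c\}$ is the multiset with $a$ copies of $1$, $b$ copies of $2$, $c$ copies of $4$. (The paper phrases this as "$\mathrm{BHR}(\{1^a,2^b,4^c\})$ holds".) *)

theory Defs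
  imports Main "HOL-Library.Multiset"
begin

definition edge_len :: "nat \<Rightarrow> nat \<Rightarrow> nat \<Rightarrow> nat" where
  "edge_len v x y = min (if x \<le> y then y - x else x - y) (v - (if x \<le> y then y - x else x - y))"

definition ham_path :: "nat \<Rightarrow> nat list \<Rightarrow> bool" where
  "ham_path v p \<longleftrightarrow> distinct p \<and> set p = {0..<v}"

definition path_lengths :: "nat \<Rightarrow> nat list \<Rightarrow> nat multiset" where
  "path_lengths v p = mset (map (\<lambda>(x, y). edge_len v x y) (zip p (tl p)))"

definition L124 :: "nat \<Rightarrow> nat \<Rightarrow> nat \<Rightarrow> nat multiset" where
  "L124 a b c = replicate_mset a 1 + replicate_mset b 2 + replicate_mset c 4"

end

theory Submission
  imports Defs
begin


definition ll :: "nat \<Rightarrow> nat \<Rightarrow> nat" where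
  "ll x y = (if x \<le> y then y - x else x - y)"

definition plen :: "(nat \<Rightarrow> nat \<Rightarrow> nat) \<Rightarrow> nat list \<Rightarrow> nat multiset" where
  "plen f P = mset (map (\<lambda>(x, y). f x y) (zip P (tl P)))"

lemma path_lengths_plen: "path_lengths v P = plen (edge_len v) P"
  by (simp add: path_lengths_def plen_def)

lemma plen_Nil[simp]: "plen f [] = {#}" by (simp add: plen_def)
lemma plen_single[simp]: "plen f [x] = {#}" by (simp add: plen_def)
lemma plen_Cons2[simp]: "plen f (x # y # zs) = add_mset (f x y) (plen f (y # zs))"
  by (simp add: plen_def)

lemma plen_append:
  "xs \<noteq> [] \<Longrightarrow> ys \<noteq> [] \<Longrightarrow> plen f (xs @ ys) = plen f xs + plen f ys + {#f (last xs) (hd ys)#}"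
proof (induction xs)
  case Nil then show ?case by simp
next
  case (Cons x xs)
  show ?case
  proof (cases xs)
    case Nil
    then show ?thesis using Cons.prems by (cases ys) auto
  next
    case (Cons y zs)
    then show ?thesis using Cons.IH Cons.prems by auto
  qed
qed

lemma plen_rev:
  assumes "\<And>x y. f x y = f y x"
  shows "plen f (rev xs) = plen f xs"
proof (induction xs)
  case Nil then show ?case by simp
next
  case (Cons x xs)
  show ?case
  proof (cases xs)
    case Nil then show ?thesis by simp
  next
    case (Cons y zs)
    have "plen f (rev (x # xs)) = plen f (rev xs @ [x])" by simp
    also have "\<dots> = plen f xs + {#f (last (rev xs)) x#}"
      using Cons Cons.IH by (simp add: plen_append del: rev.simps)
    also have "\<dots> = plen f (x # xs)" using Cons assms by (simp add: hd_rev[symmetric])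
    finally show ?thesis .
  qed
qed

lemma ll_sym: "ll x y = ll y x" by (simp add: ll_def)
lemma edge_len_sym: "edge_len v x y = edge_len v y x" by (simp add: edge_len_def)

lemma plen_shift: "plen ll (map (\<lambda>x. x + k) P) = plen ll P"
proof (induction P)
  case Nil then show ?case by simp
next
  case (Cons x P) then show ?case by (cases P) (auto simp: ll_def)
qed

definition run :: "nat \<Rightarrow> nat \<Rightarrow> nat list" where
  "run s k = map (\<lambda>i. s + 4 * i) [0..<k]"

lemma run_mem: "x \<in> set (run s k) \<longleftrightarrow> (\<exists>j<k. x = s + 4 * j)"
  by (auto simp: run_def)

lemma run_distinct: "distinct (run s k)"
  by (auto simp: run_def distinct_map inj_on_def)

lemma run_ne: "0 < k \<Longrightarrow> run s k \<noteq> []" by (simp add: run_def)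
lemma run_hd: "0 < k \<Longrightarrow> hd (run s k) = s" by (simp add: run_def hd_map)
lemma run_last: "0 < k \<Longrightarrow> last (run s k) = s + 4 * (k - 1)"
  by (simp add: run_def last_map)

lemma run_plen:
  assumes "\<And>i. Suc i < k \<Longrightarrow> f (s + 4 * i) (s + 4 * Suc i) = 4"
  shows "plen f (run s k) = replicate_mset (k - 1) 4"
  using assms
proof (induction k)
  case 0 then show ?case by (simp add: run_def)
next
  case (Suc k)
  show ?case
  proof (cases k)
    case 0 then show ?thesis by (simp add: run_def)
  next
    case (Suc j)
    have e: "run s (Suc k) = run s k @ [s + 4 * k]" by (simp add: run_def)
    have "plen f (run s (Suc k)) = plen f (run s k) + {#f (s + 4 * (k - 1)) (s + 4 * k)#}"
      unfolding e using Suc by (simp add: plen_append run_ne run_last)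
    also have "f (s + 4 * (k - 1)) (s + 4 * k) = 4"
      using Suc.prems[of "k - 1"] Suc by simp
    also have "plen f (run s k) = replicate_mset (k - 1) 4"
      using Suc.IH Suc.prems by simp
    finally show ?thesis using Suc by simp
  qed
qed

lemma run_plen_ll: "plen ll (run s k) = replicate_mset (k - 1) 4"
  by (rule run_plen) (simp add: ll_def)

lemma run_plen_edge: "8 \<le> v \<Longrightarrow> s + 4 * (k - 1) < v \<Longrightarrow> plen (edge_len v) (run s k) = replicate_mset (k - 1) 4"
  by (rule run_plen) (auto simp: edge_len_def)

definition cls :: "nat \<Rightarrow> nat \<Rightarrow> nat list" where
  "cls n r = run r ((n + 3 - r) div 4)"

lemma cls_mem: "r < 4 \<Longrightarrow> x \<in> set (cls n r) \<longleftrightarrow> x < n \<and> x mod 4 = r"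
proof -
  assume r: "r < 4"
  have "x \<in> set (cls n r) \<longleftrightarrow> (\<exists>j<(n + 3 - r) div 4. x = r + 4 * j)"
    by (simp add: cls_def run_mem)
  also have "\<dots> \<longleftrightarrow> x < n \<and> x mod 4 = r"
  proof
    assume "\<exists>j<(n + 3 - r) div 4. x = r + 4 * j"
    then obtain j where "j < (n + 3 - r) div 4" "x = r + 4 * j" by blast
    then show "x < n \<and> x mod 4 = r" using r by auto
  next
    assume h: "x < n \<and> x mod 4 = r"
    have eq: "x = r + 4 * (x div 4)" using h mod_mult_div_eq[of x 4] by simp
    moreover have "x div 4 < (n + 3 - r) div 4" using h eq by linarith
    ultimately show "\<exists>j<(n + 3 - r) div 4. x = r + 4 * j" by blast
  qed
  finally show ?thesis .
qed

lemma cls_distinct: "distinct (cls n r)" by (simp add: cls_def run_distinct)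



definition lham :: "nat \<Rightarrow> nat list \<Rightarrow> bool" where
  "lham n P \<longleftrightarrow> distinct P \<and> set P = {0..<n}"

lemma cls_ne: "r < n \<Longrightarrow> cls n r \<noteq> []"
  unfolding cls_def by (rule run_ne) linarith
lemma cls_hd: "r < n \<Longrightarrow> hd (cls n r) = r"
  unfolding cls_def by (rule run_hd) linarith
lemma cls_last: "r < n \<Longrightarrow> last (cls n r) = r + 4 * ((n + 3 - r) div 4 - 1)"
  unfolding cls_def by (rule run_last) linarith
lemma cls_plen_ll: "plen ll (cls n r) = replicate_mset ((n + 3 - r) div 4 - 1) 4"
  unfolding cls_def by (rule run_plen_ll)
lemma cls_plen_edge: "8 \<le> n \<Longrightarrow> r < 4 \<Longrightarrow> plen (edge_len n) (cls n r) = replicate_mset ((n + 3 - r) div 4 - 1) 4"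
  unfolding cls_def by (rule run_plen_edge) (simp, linarith)

lemma cls_disj: "r < 4 \<Longrightarrow> s < 4 \<Longrightarrow> r \<noteq> s \<Longrightarrow> set (cls n r) \<inter> set (cls n s) = {}"
  by (auto simp: cls_mem)

lemma mod4_cases: "(x::nat) mod 4 = 0 \<or> x mod 4 = 1 \<or> x mod 4 = 2 \<or> x mod 4 = 3"
  by linarith

lemma cls_union: "set (cls n 0) \<union> set (cls n 1) \<union> set (cls n 2) \<union> set (cls n 3) = {0..<n}"
  using mod4_cases by (auto simp: cls_mem)

lemma opA:
  assumes "lham n P" "P \<noteq> []" "hd P = 0"
  shows "lham (Suc n) (0 # map Suc P) \<and> plen ll (0 # map Suc P) = add_mset 1 (plen ll P)
     \<and> 0 # map Suc P \<noteq> [] \<and> hd (0 # map Suc P) = 0"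
proof -
  have "set (0 # map Suc P) = {0..<Suc n}"
    using assms(1) unfolding lham_def by (auto simp: image_iff)
  moreover have "distinct (0 # map Suc P)" using assms(1) by (auto simp: lham_def distinct_map)
  moreover have "plen ll (0 # map Suc P) = add_mset 1 (plen ll P)"
  proof -
    obtain x R where P: "P = x # R" using assms(2) by (cases P) auto
    have x: "x = 0" using assms(3) P by simp
    have "plen ll (0 # map Suc P) = add_mset (ll 0 1) (plen ll (map (\<lambda>y. y + 1) P))"
      using P x by simp
    moreover have "plen ll (map Suc P) = plen ll P" using plen_shift[of 1 P] by simp
    ultimately show ?thesis by (simp add: ll_def)
  qed
  ultimately show ?thesis by (simp add: lham_def)
qed

lemma opB:
  assumes "lham n P" "P \<noteq> []" "hd P = 0" "last P = 1"
  defines "Q \<equiv> 0 # map (\<lambda>x. x + 2) P @ [1]"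
  shows "lham (n + 2) Q \<and> plen ll Q = plen ll P + {#2, 2#} \<and> Q \<noteq> [] \<and> hd Q = 0 \<and> last Q = 1"
proof -
  have "set Q = {0..<n+2}"
  proof
    show "set Q \<subseteq> {0..<n+2}" using assms(1) unfolding lham_def Q_def by auto
  next
    show "{0..<n+2} \<subseteq> set Q"
    proof
      fix y assume y: "y \<in> {0..<n+2}"
      show "y \<in> set Q"
      proof (cases "y < 2")
        case True then have "y = 0 \<or> y = 1" by auto
        then show ?thesis by (auto simp: Q_def)
      next
        case False
        then have "y - 2 \<in> set P" using y assms(1) by (auto simp: lham_def)
        moreover have "y = (y - 2) + 2" using False by simp
        ultimately show ?thesis unfolding Q_def by (metis UnCI image_eqI list.set_intros(2) set_append set_map)
      qed
    qed
  qed
  moreover have "distinct Q" using assms(1) by (auto simp: lham_def distinct_map Q_def inj_on_def)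
  moreover have "plen ll Q = plen ll P + {#2, 2#}"
  proof -
    obtain x R where P: "P = x # R" using assms(2) by (cases P) auto
    have x: "x = 0" using assms(3) P by simp
    have "plen ll Q = add_mset 2 (plen ll (map (\<lambda>y. y + 2) P @ [1]))"
      using P x by (simp add: Q_def ll_def)
    also have "plen ll (map (\<lambda>y. y + 2) P @ [1]) = plen ll (map (\<lambda>y. y + 2) P) + {#ll (last P + 2) 1#}"
      using assms(2) by (simp add: plen_append last_map del: add_2_eq_Suc')
    also have "\<dots> = plen ll P + {#2#}" using assms(4) by (simp only: plen_shift) (simp add: ll_def)
    finally show ?thesis by simp
  qed
  ultimately show ?thesis using assms by (simp add: lham_def Q_def)
qed



lemma nat_mod4_split:
  fixes n :: nat
  obtains q where "n = 4 * q" | q where "n = 4 * q + 1" | q where "n = 4 * q + 2" | q where "n = 4 * q + 3"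
proof -
  have e: "n = 4 * (n div 4) + n mod 4" by simp
  have "n mod 4 = 0 \<or> n mod 4 = 1 \<or> n mod 4 = 2 \<or> n mod 4 = 3" by (rule mod4_cases)
  then show ?thesis
  proof (elim disjE)
    assume "n mod 4 = 0" then show ?thesis using e that(1)[of "n div 4"] by simp
  next
    assume "n mod 4 = 1" then show ?thesis using e that(2)[of "n div 4"] by simp
  next
    assume "n mod 4 = 2" then show ?thesis using e that(3)[of "n div 4"] by simp
  next
    assume "n mod 4 = 3" then show ?thesis using e that(4)[of "n div 4"] by simp
  qed
qed
lemma d4[simp]: "Suc (4*q) div 4 = q" "Suc (Suc (4*q)) div 4 = q" "Suc (Suc (Suc (4*q))) div 4 = q" for q :: nat
  by linarith+

lemma m4[simp]: "Suc (4*q) mod 4 = 1" "Suc (Suc (4*q)) mod 4 = 2" "Suc (Suc (Suc (4*q))) mod 4 = 3" for q :: nat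
  by presburger+

lemma plen_app4:
  assumes "A \<noteq> []" "B \<noteq> []" "C \<noteq> []" "D \<noteq> []"
  shows "plen f (A @ B @ C @ D) = plen f A + plen f B + plen f C + plen f D
     + {#f (last A) (hd B), f (last B) (hd C), f (last C) (hd D)#}"
  using assms by (simp add: plen_append add.assoc add.left_commute)

lemmas plen_rev_ll = plen_rev[of ll, OF ll_sym]
lemmas plen_rev_edge = plen_rev[of "edge_len v" for v, OF edge_len_sym]

definition ori :: "bool \<Rightarrow> nat list \<Rightarrow> nat list" where
  "ori b xs = (if b then rev xs else xs)"

lemma rep_add: "replicate_mset x a + replicate_mset y a = replicate_mset (x + y) a"
  by (induction x) auto

lemma cls_plen_gen:
  assumes f4: "\<And>x. x + 4 < n \<Longrightarrow> f x (x + 4) = 4" and r: "r < 4"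
  shows "plen f (cls n r) = replicate_mset ((n + 3 - r) div 4 - 1) 4"
  unfolding cls_def
proof (rule run_plen)
  fix i assume "Suc i < (n + 3 - r) div 4"
  then have "r + 4 * i + 4 < n" by linarith
  then have "f (r + 4 * i) (r + 4 * i + 4) = 4" using f4 by blast
  moreover have "r + 4 * Suc i = r + 4 * i + 4" by simp
  ultimately show "f (r + 4 * i) (r + 4 * Suc i) = 4" by metis
qed

lemma cnt_sum: "4 \<le> n \<Longrightarrow> ((n + 3) div 4 - 1) + ((n + 3 - 1) div 4 - 1) + ((n + 3 - 2) div 4 - 1) + ((n + 3 - 3) div 4 - 1) = n - 4"
  for n :: nat by (cases n rule: nat_mod4_split) simp_all

lemma snake4:
  fixes b1 b2 b3 b4 :: bool
  assumes n: "4 \<le> n"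
    and rs: "r1 < 4" "r2 < 4" "r3 < 4" "r4 < 4" "distinct [r1, r2, r3, r4]"
    and f4': "\<forall>x. x + 4 < n \<longrightarrow> f x (x + 4) = 4" and fs': "\<forall>x y. f x y = f y x"
  defines "P1 \<equiv> ori b1 (cls n r1)" and "P2 \<equiv> ori b2 (cls n r2)"
    and "P3 \<equiv> ori b3 (cls n r3)" and "P4 \<equiv> ori b4 (cls n r4)"
  shows "lham n (P1 @ P2 @ P3 @ P4)"
    and "plen f (P1 @ P2 @ P3 @ P4) = replicate_mset (n - 4) 4 +
          {#f (last P1) (hd P2), f (last P2) (hd P3), f (last P3) (hd P4)#}"
    and "hd (P1 @ P2 @ P3 @ P4) = hd P1" and "last (P1 @ P2 @ P3 @ P4) = last P4"
    and "P1 @ P2 @ P3 @ P4 \<noteq> []"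
proof -
  have f4: "\<And>x. x + 4 < n \<Longrightarrow> f x (x + 4) = 4" using f4' by blast
  have fs: "\<And>x y. f x y = f y x" using fs' by blast
  have all: "{r1, r2, r3, r4} = {0, 1, 2, 3}"
  proof -
    have "{r1, r2, r3, r4} \<subseteq> {0, 1, 2, 3}" using rs by auto
    moreover have "card {r1, r2, r3, r4} = 4" using rs(5) by simp
    ultimately show ?thesis by (simp add: card_subset_eq)
  qed
  have setP: "\<And>b r. set (ori b (cls n r)) = set (cls n r)" by (simp add: ori_def)
  have distP: "\<And>b r. distinct (ori b (cls n r))" by (simp add: ori_def cls_distinct)
  have neP: "\<And>b r. r < 4 \<Longrightarrow> ori b (cls n r) \<noteq> []" using n cls_ne by (simp add: ori_def)
  show "hd (P1 @ P2 @ P3 @ P4) = hd P1" "last (P1 @ P2 @ P3 @ P4) = last P4" "P1 @ P2 @ P3 @ P4 \<noteq> []"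
    using neP rs by (simp_all add: P1_def P2_def P3_def P4_def)
  have plP: "\<And>b r. r < 4 \<Longrightarrow> plen f (ori b (cls n r)) = replicate_mset ((n + 3 - r) div 4 - 1) 4"
    using cls_plen_gen[of n f, OF f4] plen_rev[OF fs] by (simp add: ori_def)
  show "lham n (P1 @ P2 @ P3 @ P4)"
  proof -
    have "set (P1 @ P2 @ P3 @ P4) = (\<Union>r\<in>{r1, r2, r3, r4}. set (cls n r))"
      by (auto simp: P1_def P2_def P3_def P4_def setP)
    also have "\<dots> = {0..<n}" unfolding all using cls_union by auto
    finally have s: "set (P1 @ P2 @ P3 @ P4) = {0..<n}" .
    have "distinct (P1 @ P2 @ P3 @ P4)"
      using rs cls_disj by (auto simp: P1_def P2_def P3_def P4_def setP distP)
    with s show ?thesis by (simp add: lham_def)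
  qed
  have "plen f (P1 @ P2 @ P3 @ P4) = plen f P1 + plen f P2 + plen f P3 + plen f P4
     + {#f (last P1) (hd P2), f (last P2) (hd P3), f (last P3) (hd P4)#}"
    by (rule plen_app4) (simp_all add: P1_def P2_def P3_def P4_def neP rs)
  also have "plen f P1 + plen f P2 + plen f P3 + plen f P4 = replicate_mset
     (((n + 3 - r1) div 4 - 1) + ((n + 3 - r2) div 4 - 1) + ((n + 3 - r3) div 4 - 1) + ((n + 3 - r4) div 4 - 1)) 4"
    by (simp add: P1_def P2_def P3_def P4_def plP rs rep_add)
  also have "((n + 3 - r1) div 4 - 1) + ((n + 3 - r2) div 4 - 1) + ((n + 3 - r3) div 4 - 1) + ((n + 3 - r4) div 4 - 1)
     = (\<Sum>r\<in>{r1, r2, r3, r4}. (n + 3 - r) div 4 - 1)"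
    using rs(5) by (simp add: add.assoc)
  also have "\<dots> = n - 4" unfolding all using cnt_sum[OF n] by (simp add: add.assoc)
  finally show "plen f (P1 @ P2 @ P3 @ P4) = replicate_mset (n - 4) 4 +
          {#f (last P1) (hd P2), f (last P2) (hd P3), f (last P3) (hd P4)#}" .
qed


lemma ori_hd: "r < n \<Longrightarrow> hd (ori b (cls n r)) = (if b then r + 4 * ((n + 3 - r) div 4 - 1) else r)"
  using cls_ne[of r n] by (simp add: ori_def hd_rev cls_hd cls_last)
lemma ori_last: "r < n \<Longrightarrow> last (ori b (cls n r)) = (if b then r else r + 4 * ((n + 3 - r) div 4 - 1))"
  using cls_ne[of r n] by (simp add: ori_def last_rev cls_hd cls_last)

lemma ll4: "ll x (x + 4) = 4" by (simp add: ll_def)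
lemma edge4: "8 \<le> v \<Longrightarrow> edge_len v x (x + 4) = 4" by (simp add: edge_len_def)

lemma rep12: "replicate_mset 2 x = {#x, x#}" "replicate_mset 1 x = {#x#}"
  by (simp_all add: numeral_2_eq_2)

lemma S2:
  assumes n: "5 \<le> n"
  defines "S \<equiv> ori False (cls n 0) @ ori True (cls n 2) @ ori False (cls n 3) @ ori True (cls n 1)"
  shows "lham n S \<and> S \<noteq> [] \<and> hd S = 0 \<and> last S = 1 \<and> plen ll S = L124 1 2 (n - 4)"
proof -
  have n4: "4 \<le> n" using n by simp
  have h: "(0::nat) < 4" "(2::nat) < 4" "(3::nat) < 4" "(1::nat) < 4" "distinct [0, 2, 3, 1::nat]" by simp_all
  have f4: "\<forall>x. x + 4 < n \<longrightarrow> ll x (x + 4) = 4" by (simp add: ll4)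
  have fs: "\<forall>x y. ll x y = ll y x" by (simp add: ll_sym)
  note sn = snake4[of n 0 2 3 1 ll False True False True, OF n4 h f4 fs, folded S_def]
  have j1: "ll (last (ori False (cls n 0))) (hd (ori True (cls n 2))) = 2"
    using n by (simp add: ori_hd ori_last) (cases n rule: nat_mod4_split; auto simp: ll_def)
  have j2: "ll (last (ori True (cls n 2))) (hd (ori False (cls n 3))) = 1"
    using n by (simp add: ori_hd ori_last ll_def)
  have j3: "ll (last (ori False (cls n 3))) (hd (ori True (cls n 1))) = 2"
    using n by (simp add: ori_hd ori_last) (cases n rule: nat_mod4_split; auto simp: ll_def)
  have "plen ll S = L124 1 2 (n - 4)"
    unfolding sn(2) j1 j2 j3 by (simp add: L124_def rep12)
  moreover have "hd S = 0" "last S = 1" unfolding sn(3,4) using n by (simp_all add: ori_hd ori_last)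
  ultimately show ?thesis using sn(1,5) by simp
qed

lemma S4e:
  assumes "5 \<le> n" "even n"
  defines "S \<equiv> ori False (cls n 0) @ ori True (cls n 1) @ ori False (cls n 3) @ ori True (cls n 2)"
  shows "lham n S \<and> S \<noteq> [] \<and> hd S = 0 \<and> plen ll S = L124 2 1 (n - 4)"
proof -
  have n4: "4 \<le> n" using assms by simp
  have h: "(0::nat) < 4" "(1::nat) < 4" "(3::nat) < 4" "(2::nat) < 4" "distinct [0, 1, 3, 2::nat]" by simp_all
  have f4: "\<forall>x. x + 4 < n \<longrightarrow> ll x (x + 4) = 4" using assms by (simp add: ll4)
  have fs: "\<forall>x y. ll x y = ll y x" by (simp add: ll_sym)
  note sn = snake4[of n 0 1 3 2 "ll" False True False True, OF n4 h f4 fs, folded S_def]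
  have j1: "ll (last (ori False (cls n 0))) (hd (ori True (cls n 1))) = 1"
    using assms by (simp add: ori_hd ori_last) (cases n rule: nat_mod4_split; auto simp: ll_def)
  have j2: "ll (last (ori True (cls n 1))) (hd (ori False (cls n 3))) = 2"
    using assms by (simp add: ori_hd ori_last) (cases n rule: nat_mod4_split; auto simp: ll_def)
  have j3: "ll (last (ori False (cls n 3))) (hd (ori True (cls n 2))) = 1"
    using assms by (simp add: ori_hd ori_last) (cases n rule: nat_mod4_split; auto simp: ll_def)
  have p: "plen ll S = L124 2 1 (n - 4)"
    unfolding sn(2) j1 j2 j3 by (simp add: L124_def rep12 add_mset_commute)
  have hS: "hd S = hd (ori False (cls n 0))" "last S = last (ori True (cls n 2))" using sn(3,4) by simp_all
  show ?thesis using sn(1,5) p hS assms by (simp add: ori_hd)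
qed

lemma S4o:
  assumes "5 \<le> n" "odd n"
  defines "S \<equiv> ori False (cls n 0) @ ori True (cls n 3) @ ori False (cls n 1) @ ori True (cls n 2)"
  shows "lham n S \<and> S \<noteq> [] \<and> hd S = 0 \<and> plen ll S = L124 2 1 (n - 4)"
proof -
  have n4: "4 \<le> n" using assms by simp
  have h: "(0::nat) < 4" "(3::nat) < 4" "(1::nat) < 4" "(2::nat) < 4" "distinct [0, 3, 1, 2::nat]" by simp_all
  have f4: "\<forall>x. x + 4 < n \<longrightarrow> ll x (x + 4) = 4" using assms by (simp add: ll4)
  have fs: "\<forall>x y. ll x y = ll y x" by (simp add: ll_sym)
  note sn = snake4[of n 0 3 1 2 "ll" False True False True, OF n4 h f4 fs, folded S_def]
  have j1: "ll (last (ori False (cls n 0))) (hd (ori True (cls n 3))) = 1"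
    using assms by (simp add: ori_hd ori_last) (cases n rule: nat_mod4_split; auto simp: ll_def)
  have j2: "ll (last (ori True (cls n 3))) (hd (ori False (cls n 1))) = 2"
    using assms by (simp add: ori_hd ori_last) (cases n rule: nat_mod4_split; auto simp: ll_def)
  have j3: "ll (last (ori False (cls n 1))) (hd (ori True (cls n 2))) = 1"
    using assms by (simp add: ori_hd ori_last) (cases n rule: nat_mod4_split; auto simp: ll_def)
  have p: "plen ll S = L124 2 1 (n - 4)"
    unfolding sn(2) j1 j2 j3 by (simp add: L124_def rep12 add_mset_commute)
  have hS: "hd S = hd (ori False (cls n 0))" "last S = last (ori True (cls n 2))" using sn(3,4) by simp_all
  show ?thesis using sn(1,5) p hS assms by (simp add: ori_hd)
qed

lemma cyc1:
  assumes "8 \<le> v" "v mod 4 = 1"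
  defines "S \<equiv> ori False (cls v 0) @ ori False (cls v 3) @ ori True (cls v 1) @ ori False (cls v 2)"
  shows "ham_path v S \<and> path_lengths v S = L124 1 1 (v - 3)"
proof -
  have n4: "4 \<le> v" using assms by simp
  have h: "(0::nat) < 4" "(3::nat) < 4" "(1::nat) < 4" "(2::nat) < 4" "distinct [0, 3, 1, 2::nat]" by simp_all
  have f4: "\<forall>x. x + 4 < v \<longrightarrow> edge_len v x (x + 4) = 4" using assms by (simp add: edge4)
  have fs: "\<forall>x y. edge_len v x y = edge_len v y x" by (simp add: edge_len_sym)
  note sn = snake4[of v 0 3 1 2 "(edge_len v)" False False True False, OF n4 h f4 fs, folded S_def]
  have j1: "edge_len v (last (ori False (cls v 0))) (hd (ori False (cls v 3))) = 4"
    using assms by (simp add: ori_hd ori_last) (cases v rule: nat_mod4_split; auto simp: edge_len_def)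
  have j2: "edge_len v (last (ori False (cls v 3))) (hd (ori True (cls v 1))) = 2"
    using assms by (simp add: ori_hd ori_last) (cases v rule: nat_mod4_split; auto simp: edge_len_def)
  have j3: "edge_len v (last (ori True (cls v 1))) (hd (ori False (cls v 2))) = 1"
    using assms by (simp add: ori_hd ori_last) (cases v rule: nat_mod4_split; auto simp: edge_len_def)
  have r3: "replicate_mset (v - 3) 4 = add_mset 4 (replicate_mset (v - 4) (4::nat))"
  proof -
    have "v - 3 = Suc (v - 4)" using assms by simp
    then show ?thesis by simp
  qed
  have p: "plen (edge_len v) S = L124 1 1 (v - 3)"
    unfolding sn(2) j1 j2 j3 by (simp add: L124_def rep12 add_mset_commute r3)
  have hS: "hd S = hd (ori False (cls v 0))" "last S = last (ori False (cls v 2))" using sn(3,4) by simp_all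
  show ?thesis using sn(1,5) p hS assms by (simp add: lham_def ham_path_def path_lengths_plen)
qed

lemma cyc3:
  assumes "8 \<le> v" "v mod 4 = 3"
  defines "S \<equiv> ori False (cls v 0) @ ori False (cls v 1) @ ori True (cls v 3) @ ori False (cls v 2)"
  shows "ham_path v S \<and> path_lengths v S = L124 1 1 (v - 3)"
proof -
  have n4: "4 \<le> v" using assms by simp
  have h: "(0::nat) < 4" "(1::nat) < 4" "(3::nat) < 4" "(2::nat) < 4" "distinct [0, 1, 3, 2::nat]" by simp_all
  have f4: "\<forall>x. x + 4 < v \<longrightarrow> edge_len v x (x + 4) = 4" using assms by (simp add: edge4)
  have fs: "\<forall>x y. edge_len v x y = edge_len v y x" by (simp add: edge_len_sym)
  note sn = snake4[of v 0 1 3 2 "(edge_len v)" False False True False, OF n4 h f4 fs, folded S_def]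
  have j1: "edge_len v (last (ori False (cls v 0))) (hd (ori False (cls v 1))) = 4"
    using assms by (simp add: ori_hd ori_last) (cases v rule: nat_mod4_split; auto simp: edge_len_def)
  have j2: "edge_len v (last (ori False (cls v 1))) (hd (ori True (cls v 3))) = 2"
    using assms by (simp add: ori_hd ori_last) (cases v rule: nat_mod4_split; auto simp: edge_len_def)
  have j3: "edge_len v (last (ori True (cls v 3))) (hd (ori False (cls v 2))) = 1"
    using assms by (simp add: ori_hd ori_last) (cases v rule: nat_mod4_split; auto simp: edge_len_def)
  have r3: "replicate_mset (v - 3) 4 = add_mset 4 (replicate_mset (v - 4) (4::nat))"
  proof -
    have "v - 3 = Suc (v - 4)" using assms by simp
    then show ?thesis by simp
  qed
  have p: "plen (edge_len v) S = L124 1 1 (v - 3)"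
    unfolding sn(2) j1 j2 j3 by (simp add: L124_def rep12 add_mset_commute r3)
  have hS: "hd S = hd (ori False (cls v 0))" "last S = last (ori False (cls v 2))" using sn(3,4) by simp_all
  show ?thesis using sn(1,5) p hS assms by (simp add: lham_def ham_path_def path_lengths_plen)
qed

lemma cyc2:
  assumes "8 \<le> v" "v mod 4 = 2"
  defines "S \<equiv> ori False (cls v 0) @ ori False (cls v 2) @ ori True (cls v 3) @ ori False (cls v 1)"
  shows "ham_path v S \<and> path_lengths v S = L124 1 1 (v - 3)"
proof -
  have n4: "4 \<le> v" using assms by simp
  have h: "(0::nat) < 4" "(2::nat) < 4" "(3::nat) < 4" "(1::nat) < 4" "distinct [0, 2, 3, 1::nat]" by simp_all
  have f4: "\<forall>x. x + 4 < v \<longrightarrow> edge_len v x (x + 4) = 4" using assms by (simp add: edge4)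
  have fs: "\<forall>x y. edge_len v x y = edge_len v y x" by (simp add: edge_len_sym)
  note sn = snake4[of v 0 2 3 1 "(edge_len v)" False False True False, OF n4 h f4 fs, folded S_def]
  have j1: "edge_len v (last (ori False (cls v 0))) (hd (ori False (cls v 2))) = 4"
    using assms by (simp add: ori_hd ori_last) (cases v rule: nat_mod4_split; auto simp: edge_len_def)
  have j2: "edge_len v (last (ori False (cls v 2))) (hd (ori True (cls v 3))) = 1"
    using assms by (simp add: ori_hd ori_last) (cases v rule: nat_mod4_split; auto simp: edge_len_def)
  have j3: "edge_len v (last (ori True (cls v 3))) (hd (ori False (cls v 1))) = 2"
    using assms by (simp add: ori_hd ori_last) (cases v rule: nat_mod4_split; auto simp: edge_len_def)
  have r3: "replicate_mset (v - 3) 4 = add_mset 4 (replicate_mset (v - 4) (4::nat))"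
  proof -
    have "v - 3 = Suc (v - 4)" using assms by simp
    then show ?thesis by simp
  qed
  have p: "plen (edge_len v) S = L124 1 1 (v - 3)"
    unfolding sn(2) j1 j2 j3 by (simp add: L124_def rep12 add_mset_commute r3)
  have hS: "hd S = hd (ori False (cls v 0))" "last S = last (ori False (cls v 1))" using sn(3,4) by simp_all
  show ?thesis using sn(1,5) p hS assms by (simp add: lham_def ham_path_def path_lengths_plen)
qed



lemma plen_Cons: "X \<noteq> [] \<Longrightarrow> plen f (x # X) = add_mset (f x (hd X)) (plen f X)"
  by (cases X) auto

lemma L124_Suc_a: "L124 (Suc a) b c = add_mset 1 (L124 a b c)" by (simp add: L124_def)
lemma L124_Suc_b: "L124 a (Suc b) c = add_mset 2 (L124 a b c)" by (simp add: L124_def)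

lemma opC:
  assumes "lham n P" "P \<noteq> []" "hd P = 0" "last P = 1"
  defines "Q \<equiv> 0 # map Suc (rev P)"
  shows "lham (Suc n) Q \<and> plen ll Q = add_mset 2 (plen ll P) \<and> Q \<noteq> [] \<and> hd Q = 0 \<and> last Q = 1"
proof -
  have "set Q = {0..<Suc n}"
    using assms(1) unfolding lham_def Q_def by (auto simp: image_iff)
  moreover have "distinct Q" using assms(1) by (auto simp: lham_def distinct_map Q_def)
  moreover have "plen ll Q = add_mset 2 (plen ll P)"
  proof -
    have ne: "map Suc (rev P) \<noteq> []" using assms(2) by simp
    have h: "hd (map Suc (rev P)) = 2" using assms(2,4) by (simp add: hd_map hd_rev)
    have "plen ll (map Suc (rev P)) = plen ll (rev P)" using plen_shift[of 1 "rev P"] by simp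
    also have "\<dots> = plen ll P" by (rule plen_rev_ll)
    finally show ?thesis unfolding Q_def using plen_Cons[OF ne, of ll 0] h by (simp add: ll_def)
  qed
  moreover have "last Q = 1" using assms(2,3) by (simp add: Q_def last_map last_rev)
  ultimately show ?thesis by (simp add: lham_def Q_def)
qed

lemma lin_b:
  assumes "1 \<le> c"
  shows "\<exists>P. lham (2 + j + c + 2) P \<and> P \<noteq> [] \<and> hd P = 0 \<and> last P = 1 \<and> plen ll P = L124 1 (2 + j) c"
proof (induction j)
  case 0
  have "5 \<le> c + 4" using assms by simp
  note X = S2[OF this]
  have e1: "2 + 0 + c + 2 = c + 4" by simp
  have e2: "c + 4 - 4 = c" by simp
  show ?case unfolding e1 using X unfolding e2 by auto
next
  case (Suc j)
  then obtain P where P: "lham (2 + j + c + 2) P" "P \<noteq> []" "hd P = 0" "last P = 1" "plen ll P = L124 1 (2 + j) c" by blast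
  note C = opC[OF P(1-4)]
  show ?case
    apply (rule exI[of _ "0 # map Suc (rev P)"])
    using C P(5) by (simp add: L124_Suc_b)
qed

lemma lin_a:
  assumes "lham n P" "P \<noteq> []" "hd P = 0" "plen ll P = L124 a b c"
  shows "\<exists>Q. lham (n + i) Q \<and> Q \<noteq> [] \<and> hd Q = 0 \<and> plen ll Q = L124 (a + i) b c"
proof (induction i)
  case 0 then show ?case using assms by auto
next
  case (Suc i)
  then obtain Q where Q: "lham (n + i) Q" "Q \<noteq> []" "hd Q = 0" "plen ll Q = L124 (a + i) b c" by blast
  note A = opA[OF Q(1-3)]
  show ?case
    apply (rule exI[of _ "0 # map Suc Q"])
    using A Q(4) by (simp add: L124_Suc_a)
qed

lemma L124_mem: "x \<in># L124 a b c \<Longrightarrow> x \<le> 4"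
  by (auto simp: L124_def split: if_splits)

lemma lin_to_path:
  assumes "lham v P" "plen ll P = L124 a b c" "8 \<le> v"
  shows "ham_path v P \<and> path_lengths v P = L124 a b c"
proof -
  have "path_lengths v P = plen ll P"
    unfolding path_lengths_plen plen_def
  proof (rule arg_cong[where f = mset], rule map_cong[OF refl])
    fix p assume p: "p \<in> set (zip P (tl P))"
    obtain x y where xy: "p = (x, y)" by (cases p)
    have "ll x y \<in># plen ll P" using p xy unfolding plen_def by force
    then have "ll x y \<le> 4" using assms(2) L124_mem by simp
    then show "(case p of (x, y) \<Rightarrow> edge_len v x y) = (case p of (x, y) \<Rightarrow> ll x y)"
      using xy assms(3) by (simp add: edge_len_def ll_def)
  qed
  then show ?thesis using assms by (simp add: lham_def ham_path_def)
qed



lemma classes_bound: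
  "card ((\<lambda>x::nat. x mod 4) ` set P) \<le> 1 + length (filter (\<lambda>(x, y). x mod 4 \<noteq> y mod 4) (zip P (tl P)))"
proof (induction P)
  case Nil then show ?case by simp
next
  case (Cons x P)
  show ?case
  proof (cases P)
    case Nil then show ?thesis by simp
  next
    case (Cons y R)
    have img: "(\<lambda>x. x mod 4) ` set (x # P) = insert (x mod 4) ((\<lambda>x. x mod 4) ` set P)" by simp
    have fin: "finite ((\<lambda>x::nat. x mod 4) ` set P)" by simp
    show ?thesis
    proof (cases "x mod 4 = y mod 4")
      case True
      then have "insert (x mod 4) ((\<lambda>x. x mod 4) ` set P) = (\<lambda>x. x mod 4) ` set P" using Cons by auto
      then show ?thesis using Cons.IH Cons True img by simp
    next
      case False
      have "card (insert (x mod 4) ((\<lambda>x. x mod 4) ` set P)) \<le> Suc (card ((\<lambda>x. x mod 4) ` set P))"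
        using fin by (simp add: card_insert_if)
      then show ?thesis using Cons.IH Cons False img by simp
    qed
  qed
qed

lemma edge4_cong: "4 dvd v \<Longrightarrow> edge_len v x y = 4 \<Longrightarrow> x mod 4 = y mod 4"
proof -
  assume d: "4 dvd v" and e: "edge_len v x y = 4"
  define d where "d = ll x y"
  have e': "min d (v - d) = 4" using e by (simp add: edge_len_def d_def ll_def)
  have "4 dvd d"
  proof (cases "d \<le> v - d")
    case True then have "d = 4" using e' by simp
    then show ?thesis by simp
  next
    case False then have "v - d = 4" using e' by simp
    then have "d = v - 4" "4 \<le> v" by auto
    then show ?thesis using d by (simp add: dvd_diff_nat)
  qed
  then show ?thesis unfolding d_def ll_def
    by (cases "x \<le> y") (simp_all add: mod_eq_dvd_iff_nat[symmetric])
qed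

lemma count_filter: "length (filter (\<lambda>p. g p \<noteq> (4::nat)) zs) = size (filter_mset (\<lambda>l. l \<noteq> 4) (mset (map g zs)))"
  by (induction zs) auto

lemma filter_rep: "filter_mset Q (replicate_mset n x) = (if Q x then replicate_mset n x else {#})"
  by (induction n) auto

lemma len_filter_mono: "(\<And>x. P x \<Longrightarrow> Q x) \<Longrightarrow> length (filter P xs) \<le> length (filter Q xs)"
  by (induction xs) auto

lemma size_filter_L124: "size (filter_mset Q (L124 a b c)) = (if Q 1 then a else 0) + (if Q 2 then b else 0) + (if Q 4 then c else 0)"
proof -
  show ?thesis by (simp add: L124_def filter_rep)
qed

lemma necessity:
  assumes h: "ham_path v H" and p: "path_lengths v H = L124 1 1 c" and d: "4 dvd v" and v: "4 \<le> v"
  shows False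
proof -
  let ?zs = "zip H (tl H)"
  have "{0, 1, 2, 3} \<subseteq> (\<lambda>x::nat. x mod 4) ` set H"
  proof -
    have "\<And>r::nat. r < 4 \<Longrightarrow> r \<in> (\<lambda>x. x mod 4) ` set H"
    proof -
      fix r :: nat assume "r < 4"
      then have "r \<in> set H" "r mod 4 = r" using h v by (auto simp: ham_path_def)
      then show "r \<in> (\<lambda>x. x mod 4) ` set H" by force
    qed
    then show ?thesis by auto
  qed
  then have "card {0, 1, 2, 3::nat} \<le> card ((\<lambda>x::nat. x mod 4) ` set H)"
    by (intro card_mono) auto
  then have c4: "4 \<le> card ((\<lambda>x::nat. x mod 4) ` set H)" by simp
  have "length (filter (\<lambda>(x, y). x mod 4 \<noteq> y mod 4) ?zs) \<le>
        length (filter (\<lambda>p. (case p of (x, y) \<Rightarrow> edge_len v x y) \<noteq> 4) ?zs)"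
    by (rule len_filter_mono) (auto dest: edge4_cong[OF d])
  also have "\<dots> = size (filter_mset (\<lambda>l. l \<noteq> 4) (path_lengths v H))"
    unfolding count_filter path_lengths_def by simp
  also have "\<dots> = 2" unfolding p size_filter_L124 by simp
  finally show False using c4 classes_bound[of H] by simp
qed



theorem proposition5p1:
  fixes a b c v :: nat
  assumes "a \<ge> 1" and "b \<ge> 1" and "c \<ge> 1"
    and "v = a + b + c + 1"
    and "4 \<le> v div 2"
  shows "(\<exists>H. ham_path v H \<and> path_lengths v H = L124 a b c) \<longleftrightarrow>
         (\<forall>d. d dvd v \<longrightarrow> size (filter_mset (\<lambda>x. d dvd x) (L124 a b c)) \<le> v - d)"
proof -
  have v8: "8 \<le> v" using assms(5) by linarith
  have Req: "(\<forall>d. d dvd v \<longrightarrow> size (filter_mset (\<lambda>x. d dvd x) (L124 a b c)) \<le> v - d)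
             \<longleftrightarrow> (4 dvd v \<longrightarrow> 3 \<le> a + b)"
  proof
    assume R: "\<forall>d. d dvd v \<longrightarrow> size (filter_mset (\<lambda>x. d dvd x) (L124 a b c)) \<le> v - d"
    show "4 dvd v \<longrightarrow> 3 \<le> a + b"
    proof
      assume "4 dvd v"
      then have "size (filter_mset (\<lambda>x. 4 dvd x) (L124 a b c)) \<le> v - 4" using R by blast
      then have "c \<le> v - 4" unfolding size_filter_L124 by simp
      then show "3 \<le> a + b" using assms(4) v8 by linarith
    qed
  next
    assume H: "4 dvd v \<longrightarrow> 3 \<le> a + b"
    show "\<forall>d. d dvd v \<longrightarrow> size (filter_mset (\<lambda>x. d dvd x) (L124 a b c)) \<le> v - d"
    proof (intro allI impI)
      fix d assume dv: "d dvd v"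
      have dle: "d \<le> v" using dv v8 by (simp add: dvd_imp_le)
      have "d = 1 \<or> d = 2 \<or> d = 4 \<or> (\<not> d dvd 1 \<and> \<not> d dvd 2 \<and> \<not> d dvd 4)"
      proof (cases "d dvd 4")
        case True
        have "d \<le> 4" using True by (simp add: dvd_imp_le)
        moreover have "d \<noteq> 0" using True by (rule contrapos_pn) simp
        moreover have "d \<noteq> 3" using True by auto
        ultimately show ?thesis by auto
      next
        case False
        then have "\<not> d dvd 2" "\<not> d dvd 1" using dvd_trans[of d 2 4] dvd_trans[of d 1 4] by auto
        with False show ?thesis by auto
      qed
      then show "size (filter_mset (\<lambda>x. d dvd x) (L124 a b c)) \<le> v - d"
      proof (elim disjE)
        assume "d = 1" then show ?thesis unfolding size_filter_L124 using assms(4) by simp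
      next
        assume "d = 2" then show ?thesis unfolding size_filter_L124 using assms(1,4) by simp
      next
        assume d4: "d = 4" then have "3 \<le> a + b" using H dv by simp
        then show ?thesis unfolding size_filter_L124 using assms(4) d4 by simp
      next
        assume "\<not> d dvd 1 \<and> \<not> d dvd 2 \<and> \<not> d dvd 4"
        then show ?thesis unfolding size_filter_L124 by simp
      qed
    qed
  qed
  show ?thesis
    unfolding Req
  proof
    assume "\<exists>H. ham_path v H \<and> path_lengths v H = L124 a b c"
    then obtain H where H: "ham_path v H" "path_lengths v H = L124 a b c" by blast
    show "4 dvd v \<longrightarrow> 3 \<le> a + b"
    proof
      assume d: "4 dvd v"
      show "3 \<le> a + b"
      proof (rule ccontr)
        assume "\<not> 3 \<le> a + b"
        then have "a = 1" "b = 1" using assms(1,2) by auto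
        then have pl: "path_lengths v H = L124 1 1 c" using H(2) by simp
        have "4 \<le> v" using v8 by simp
        then show False using necessity[OF H(1) pl d] by simp
      qed
    qed
  next
    assume C: "4 dvd v \<longrightarrow> 3 \<le> a + b"
    show "\<exists>H. ham_path v H \<and> path_lengths v H = L124 a b c"
    proof (cases "2 \<le> b")
      case True
      obtain j where j: "b = 2 + j" using True le_Suc_ex by (metis add_2_eq_Suc)
      obtain P where P: "lham (2 + j + c + 2) P" "P \<noteq> []" "hd P = 0" "plen ll P = L124 1 (2 + j) c"
        using lin_b[OF assms(3), of j] by blast
      obtain Q where Q: "lham (2 + j + c + 2 + (a - 1)) Q" "plen ll Q = L124 (1 + (a - 1)) (2 + j) c"
        using lin_a[OF P, of "a - 1"] by blast
      have e1: "2 + j + c + 2 + (a - 1) = v" using assms(1,4) j by simp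
      have e2: "1 + (a - 1) = a" using assms(1) by simp
      show ?thesis using lin_to_path[of v Q a b c] Q v8 unfolding e1 e2 j by blast
    next
      case False
      then have b1: "b = 1" using assms(2) by simp
      show ?thesis
      proof (cases "2 \<le> a")
        case True
        have n5: "5 \<le> c + 4" using assms(3) by simp
        have e0: "c + 4 - 4 = c" by simp
        obtain P where P: "lham (c + 4) P" "P \<noteq> []" "hd P = 0" "plen ll P = L124 2 1 c"
        proof (cases "even (c + 4)")
          case True then show ?thesis using S4e[OF n5 True] that unfolding e0 by blast
        next
          case False then show ?thesis using S4o[OF n5 False] that unfolding e0 by blast
        qed
        obtain Q where Q: "lham (c + 4 + (a - 2)) Q" "plen ll Q = L124 (2 + (a - 2)) 1 c"
          using lin_a[OF P, of "a - 2"] by blast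
        have e1: "c + 4 + (a - 2) = v" using True assms(4) b1 by simp
        have e2: "2 + (a - 2) = a" using True by simp
        show ?thesis using lin_to_path[of v Q a b c] Q v8 unfolding e1 e2 b1 by blast
      next
        case False
        then have a1: "a = 1" using assms(1) by simp
        then have nd: "\<not> 4 dvd v" using C b1 by auto
        have cv: "c = v - 3" using assms(4) a1 b1 by simp
        have "v mod 4 = 1 \<or> v mod 4 = 2 \<or> v mod 4 = 3" using nd mod4_cases[of v] by auto
        then have "\<exists>H. ham_path v H \<and> path_lengths v H = L124 1 1 (v - 3)"
        proof (elim disjE)
          assume m: "v mod 4 = 1" show ?thesis using cyc1[OF v8 m] by blast
        next
          assume m: "v mod 4 = 2" show ?thesis using cyc2[OF v8 m] by blast
        next
          assume m: "v mod 4 = 3" show ?thesis using cyc3[OF v8 m] by blast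
        qed
        then show ?thesis using a1 b1 cv by simp
      qed
    qed
  qed
qed

end
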